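(* In the Cross Model on $\mathbb{Z}_K$ (with $K\ge1$ an integer and $\varepsilon\in(0,1)$), \[ \lim_{n\to\infty}\frac1n\mathbf{E}\big(D^{K,d}(n,0)\big)=1+2\varepsilon\,\nu_{K,\varepsilon}(\bullet,\circ). \]
   Context: Cross Model: $\mathbb{Z}_K=\mathbb{Z}\times[\![-K,K]\!]$ with vertical edges $(i,j)\to(i,j+1)$, horizontal edges $(i,j)\to(i+1,j)$ and diagonal edges $(i,j)\to(i+1,j\pm1)$ (within the strip). Vertical and horizontal edges have length $1$, diagonal edges length $2$. All vertical and diagonal edges are open; each horizontal edge is open with probability $1-\varepsilon$, independently. $D^{K,d}(i,j)$ is the length of a shortest open path in $\mathbb{Z}_K$ from $(0,0)$ to $(i,j)$. $\nu_{K,\varepsilon}$ denotes the stationary distribution of the discrete-time synchronous TASEP on $[\![-K+1,K]\!]$ (state space $\{\bullet,\circ\}^{2K}$, elements written $(y^{-K+1},\dots,y^K)$, $\bullet$ = occupied) in which, from time $t$ to $t+1$ independently: each particle at $j<K$ with site $j+1$ empty at time $t$ moves to $j+1$ with probability $\varepsilon$; a particle enters at the empty site $-K+1$ with probability $\varepsilon$; a particle at site $K$ exits with probability $\varepsilon$. Finally $\nu_{K,\varepsilon}(\bullet,\circ)=\nu_{K,\varepsilon}(y^0=\bullet,\,y^1=\circ)$. *)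

theory Defs
  imports "HOL-Probability.Probability"
begin

text \<open>A configuration omega assigns to each vertex (i,j) whether the horizontal
edge (i,j) -> (i+1,j) is open.\<close>

definition cross_step :: "int \<Rightarrow> (int \<times> int \<Rightarrow> bool) \<Rightarrow> int \<times> int \<Rightarrow> int \<times> int \<Rightarrow> nat \<Rightarrow> bool" where
  "cross_step K \<omega> u v c \<longleftrightarrow>
     -K \<le> snd u \<and> snd u \<le> K \<and> -K \<le> snd v \<and> snd v \<le> K \<and>
     ((fst v = fst u \<and> snd v = snd u + 1 \<and> c = 1) \<or>
      (fst v = fst u + 1 \<and> snd v = snd u \<and> \<omega> u \<and> c = 1) \<or>
      (fst v = fst u + 1 \<and> (snd v = snd u + 1 \<or> snd v = snd u - 1) \<and> c = 2))"

inductive open_path :: "int \<Rightarrow> (int \<times> int \<Rightarrow> bool) \<Rightarrow> int \<times> int \<Rightarrow> int \<times> int \<Rightarrow> nat \<Rightarrow> bool"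
  for K \<omega> where
  refl: "open_path K \<omega> x x 0"
| step: "open_path K \<omega> x y L \<Longrightarrow> cross_step K \<omega> y z c \<Longrightarrow> open_path K \<omega> x z (L + c)"

definition cross_dist :: "int \<Rightarrow> (int \<times> int \<Rightarrow> bool) \<Rightarrow> int \<times> int \<Rightarrow> nat" where
  "cross_dist K \<omega> v = (LEAST L. open_path K \<omega> (0,0) v L)"

definition cross_measure :: "real \<Rightarrow> (int \<times> int \<Rightarrow> bool) measure" where
  "cross_measure \<epsilon> = (\<Pi>\<^sub>M e\<in>(UNIV :: (int \<times> int) set). measure_pmf (bernoulli_pmf (1 - \<epsilon>)))"

text \<open>States: occupation functions supported on [-K+1, K] (True = occupied).\<close>
definition tasep_states :: "int \<Rightarrow> (int \<Rightarrow> bool) set" where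
  "tasep_states K = {y. \<forall>j. y j \<longrightarrow> -K + 1 \<le> j \<and> j \<le> K}"

text \<open>Active bonds of state y: bond -K = entry at site -K+1 (if empty),
bond b in [-K+1,K-1] = jump b -> b+1 (if b occupied and b+1 empty),
bond K = exit from site K (if occupied).\<close>
definition tasep_active :: "int \<Rightarrow> (int \<Rightarrow> bool) \<Rightarrow> int set" where
  "tasep_active K y = {b. (b = -K \<and> \<not> y (-K + 1)) \<or>
                          (-K + 1 \<le> b \<and> b < K \<and> y b \<and> \<not> y (b + 1)) \<or>
                          (b = K \<and> y K)}"

definition tasep_update :: "int \<Rightarrow> (int \<Rightarrow> bool) \<Rightarrow> int set \<Rightarrow> (int \<Rightarrow> bool)" where
  "tasep_update K y F = (\<lambda>j. if -K + 1 \<le> j \<and> j \<le> K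
                               then (if y j then j \<notin> F else j - 1 \<in> F)
                               else False)"

definition tasep_P :: "int \<Rightarrow> real \<Rightarrow> (int \<Rightarrow> bool) \<Rightarrow> (int \<Rightarrow> bool) \<Rightarrow> real" where
  "tasep_P K \<epsilon> y y' =
     (\<Sum>F\<in>Pow (tasep_active K y).
        if tasep_update K y F = y'
        then \<epsilon> ^ card F * (1 - \<epsilon>) ^ (card (tasep_active K y) - card F) else 0)"

definition tasep_stationary :: "int \<Rightarrow> real \<Rightarrow> ((int \<Rightarrow> bool) \<Rightarrow> real) \<Rightarrow> bool" where
  "tasep_stationary K \<epsilon> \<nu> \<longleftrightarrow>
     (\<forall>y\<in>tasep_states K. 0 \<le> \<nu> y) \<and>
     (\<Sum>y\<in>tasep_states K. \<nu> y) = 1 \<and>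
     (\<forall>y'\<in>tasep_states K. \<nu> y' = (\<Sum>y\<in>tasep_states K. \<nu> y * tasep_P K \<epsilon> y y'))"

text \<open>nu(bullet, circ) = nu(y^0 = occupied, y^1 = empty).\<close>
definition nu_occ_emp :: "int \<Rightarrow> ((int \<Rightarrow> bool) \<Rightarrow> real) \<Rightarrow> real" where
  "nu_occ_emp K \<nu> = (\<Sum>y\<in>{y\<in>tasep_states K. y 0 \<and> \<not> y 1}. \<nu> y)"

end

theory Submission
  imports Defs
begin

definition dl :: "(int \<Rightarrow> bool) \<Rightarrow> int \<Rightarrow> int" where
  "dl y k = (if y k then -1 else 1)"
definition prof :: "(int \<Rightarrow> bool) \<Rightarrow> int \<Rightarrow> int" where
  "prof y j = (\<Sum>k\<in>{1..j}. dl y k) - (\<Sum>k\<in>{j+1..0}. dl y k)"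

lemma prof_step: "prof y j = prof y (j-1) + dl y j"
proof (cases "j \<ge> 1")
  case True
  have "{1..j} = insert j {1..j-1}" using True by auto
  moreover have "{j+1..0} = ({}::int set)" "{j-1+1..0} = ({}::int set)" using True by auto
  ultimately show ?thesis unfolding prof_def by simp
next
  case False
  have "{j-1+1..0} = insert j {j+1..0}" using False by auto
  moreover have "{1..j} = ({}::int set)" "{1..j-1} = ({}::int set)" using False by auto
  ultimately show ?thesis unfolding prof_def by simp
qed

lemma prof_0[simp]: "prof y 0 = 0" unfolding prof_def by simp

lemma dl_cases: "dl y k = 1 \<or> dl y k = -1" unfolding dl_def by auto

lemma prof_bound_pos: "\<bar>prof y (int k)\<bar> \<le> int k"
proof (induction k)
  case (Suc k)
  have "prof y (int (Suc k)) = prof y (int k) + dl y (int (Suc k))"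
    using prof_step[of y "int (Suc k)"] by simp
  then show ?case using Suc dl_cases[of y "int (Suc k)"] by auto
qed simp

lemma prof_bound_neg: "\<bar>prof y (- int k)\<bar> \<le> int k"
proof (induction k)
  case (Suc k)
  have "prof y (- int k) = prof y (- int (Suc k)) + dl y (- int k)"
  proof -
    have e: "- int k - 1 = - int (Suc k)" by simp
    show ?thesis using prof_step[of y "- int k"] unfolding e by simp
  qed
  then show ?case using Suc dl_cases[of y "- int k"] by auto
qed simp

lemma prof_bound: "\<bar>prof y j\<bar> \<le> \<bar>j\<bar>"
proof (cases "j \<ge> 0")
  case True then show ?thesis using prof_bound_pos[of y "nat j"] by simp
next
  case False then show ?thesis using prof_bound_neg[of y "nat (-j)"] by simp
qed

definition Fs :: "int \<Rightarrow> (int \<Rightarrow> bool) \<Rightarrow> (int \<Rightarrow> bool) \<Rightarrow> int set" where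
  "Fs K y c = {b \<in> tasep_active K y. \<not> c b}"
definition fi :: "int \<Rightarrow> (int \<Rightarrow> bool) \<Rightarrow> (int \<Rightarrow> bool) \<Rightarrow> int \<Rightarrow> int" where
  "fi K y c b = (if b \<in> Fs K y c then 1 else 0)"
definition Supd :: "int \<Rightarrow> (int \<Rightarrow> bool) \<Rightarrow> (int \<Rightarrow> bool) \<Rightarrow> (int \<Rightarrow> bool)" where
  "Supd K y c = tasep_update K y (Fs K y c)"

lemma active_range: "0 \<le> K \<Longrightarrow> b \<in> tasep_active K y \<Longrightarrow> -K \<le> b \<and> b \<le> K"
  unfolding tasep_active_def by auto

lemma Supd_states: "Supd K y c \<in> tasep_states K"
  unfolding Supd_def tasep_update_def tasep_states_def by auto

lemma dl_Supd:
  assumes "y \<in> tasep_states K" "-K+1 \<le> j" "j \<le> K"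
  shows "dl (Supd K y c) j = dl y j + 2 * fi K y c j - 2 * fi K y c (j-1)"
proof (cases "y j")
  case True
  have "j - 1 \<notin> tasep_active K y"
  proof
    assume "j - 1 \<in> tasep_active K y"
    then have "(j - 1 = -K \<and> \<not> y (-K+1)) \<or> (y (j-1) \<and> \<not> y j) \<or> (j - 1 = K)" unfolding tasep_active_def by auto
    moreover have "j - 1 = -K \<Longrightarrow> j = 1 - K" by arith
    ultimately show False using True assms(3) by (smt (verit))
  qed
  then have a: "fi K y c (j-1) = 0" unfolding fi_def Fs_def by auto
  have "Supd K y c j = (j \<notin> Fs K y c)" using True assms unfolding Supd_def tasep_update_def by auto
  then show ?thesis using a True unfolding dl_def fi_def by auto
next
  case False
  have "j \<notin> tasep_active K y" using False assms(2,3) unfolding tasep_active_def by auto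
  then have a: "fi K y c j = 0" unfolding fi_def Fs_def by auto
  have "Supd K y c j = (j - 1 \<in> Fs K y c)" using False assms unfolding Supd_def tasep_update_def by auto
  then show ?thesis using a False unfolding dl_def fi_def by auto
qed

lemma prof_Supd_pos:
  assumes "y \<in> tasep_states K" "K \<ge> 1"
  shows "int k \<le> K \<Longrightarrow> prof (Supd K y c) (int k) = prof y (int k) + 2 * fi K y c (int k) - 2 * fi K y c 0"
proof (induction k)
  case (Suc k)
  have "prof (Supd K y c) (int (Suc k)) = prof (Supd K y c) (int k) + dl (Supd K y c) (int (Suc k))"
    using prof_step[of "Supd K y c" "int (Suc k)"] by simp
  moreover have "prof y (int (Suc k)) = prof y (int k) + dl y (int (Suc k))"
    using prof_step[of y "int (Suc k)"] by simp
  moreover have "dl (Supd K y c) (int (Suc k)) = dl y (int (Suc k)) + 2 * fi K y c (int (Suc k)) - 2 * fi K y c (int k)"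
    using dl_Supd[OF assms(1), of "int (Suc k)" c] Suc.prems assms(2) by simp
  ultimately show ?case using Suc by simp
qed simp

lemma prof_Supd_neg:
  assumes "y \<in> tasep_states K" "K \<ge> 1"
  shows "int k \<le> K \<Longrightarrow> prof (Supd K y c) (- int k) = prof y (- int k) + 2 * fi K y c (- int k) - 2 * fi K y c 0"
proof (induction k)
  case (Suc k)
  have e: "- int k - 1 = - int (Suc k)" by simp
  have "prof (Supd K y c) (- int k) = prof (Supd K y c) (- int (Suc k)) + dl (Supd K y c) (- int k)"
    using prof_step[of "Supd K y c" "- int k"] unfolding e by simp
  moreover have "prof y (- int k) = prof y (- int (Suc k)) + dl y (- int k)"
    using prof_step[of y "- int k"] unfolding e by simp
  moreover have "dl (Supd K y c) (- int k) = dl y (- int k) + 2 * fi K y c (- int k) - 2 * fi K y c (- int (Suc k))"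
    using dl_Supd[OF assms(1), of "- int k" c] Suc.prems assms(2) unfolding e by simp
  ultimately show ?case using Suc by simp
qed simp

lemma prof_Supd:
  assumes "y \<in> tasep_states K" "K \<ge> 1" "-K \<le> j" "j \<le> K"
  shows "prof (Supd K y c) j = prof y j + 2 * fi K y c j - 2 * fi K y c 0"
proof (cases "j \<ge> 0")
  case True then show ?thesis using prof_Supd_pos[OF assms(1,2), of "nat j" c] assms by simp
next
  case False then show ?thesis using prof_Supd_neg[OF assms(1,2), of "nat (-j)" c] assms by simp
qed

lemma prof_slope: "prof y (j+1) = prof y j + 1 \<or> prof y (j+1) = prof y j - 1"
  using prof_step[of y "j+1"] dl_cases[of y "j+1"] by auto

lemma act_nbr:
  assumes "y \<in> tasep_states K" "K \<ge> 1" "j \<in> tasep_active K y"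
  shows "(j > -K \<longrightarrow> prof y (j-1) = prof y j + 1) \<and> (j < K \<longrightarrow> prof y (j+1) = prof y j + 1)"
proof -
  have s1: "prof y j = prof y (j-1) + dl y j" by (rule prof_step)
  have s2: "prof y (j+1) = prof y j + dl y (j+1)" using prof_step[of y "j+1"] by simp
  from assms(3) have "(j = -K \<and> \<not> y (-K + 1)) \<or> (-K + 1 \<le> j \<and> j < K \<and> y j \<and> \<not> y (j + 1)) \<or> (j = K \<and> y K)"
    unfolding tasep_active_def by auto
  then show ?thesis
  proof (elim disjE)
    assume a: "j = -K \<and> \<not> y (-K + 1)"
    then have "\<not> y (j+1)" by (simp add: add.commute)
    then show ?thesis using a s2 unfolding dl_def by auto
  next
    assume a: "-K + 1 \<le> j \<and> j < K \<and> y j \<and> \<not> y (j + 1)"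
    then show ?thesis using s1 s2 unfolding dl_def by auto
  next
    assume a: "j = K \<and> y K"
    then show ?thesis using s1 unfolding dl_def by auto
  qed
qed

lemma nact_nbr:
  assumes "y \<in> tasep_states K" "K \<ge> 1" "-K \<le> j" "j \<le> K" "j \<notin> tasep_active K y"
  shows "(j > -K \<and> prof y (j-1) = prof y j - 1) \<or> (j < K \<and> prof y (j+1) = prof y j - 1)"
proof -
  have s1: "prof y j = prof y (j-1) + dl y j" by (rule prof_step)
  have s2: "prof y (j+1) = prof y j + dl y (j+1)" using prof_step[of y "j+1"] by simp
  consider "j = -K" | "-K < j \<and> j < K" | "j = K" using assms(3,4) by linarith
  then show ?thesis
  proof cases
    case 1
    then have "y (j+1)" using assms(5) unfolding tasep_active_def by (auto simp: add.commute)
    then show ?thesis using 1 s2 assms(2) unfolding dl_def by auto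
  next
    case 2
    then have "\<not> y j \<or> y (j+1)" using assms(5) unfolding tasep_active_def by auto
    then show ?thesis using 2 s1 s2 unfolding dl_def by auto
  next
    case 3
    then have "\<not> y K" using assms(5) unfolding tasep_active_def by auto
    then show ?thesis using 3 s1 assms(2) unfolding dl_def by auto
  qed
qed

definition col :: "(int \<times> int \<Rightarrow> bool) \<Rightarrow> nat \<Rightarrow> int \<Rightarrow> bool" where
  "col \<omega> m = (\<lambda>j. \<omega> (int m, j))"

fun st :: "int \<Rightarrow> (int \<times> int \<Rightarrow> bool) \<Rightarrow> (int \<Rightarrow> bool) \<Rightarrow> nat \<Rightarrow> (int \<Rightarrow> bool)" where
  "st K \<omega> y 0 = y"
| "st K \<omega> y (Suc m) = Supd K (st K \<omega> y m) (col \<omega> m)"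

definition inc :: "int \<Rightarrow> (int \<Rightarrow> bool) \<Rightarrow> (int \<Rightarrow> bool) \<Rightarrow> int" where
  "inc K y c = 1 + 2 * fi K y c 0"

definition hgt :: "int \<Rightarrow> (int \<times> int \<Rightarrow> bool) \<Rightarrow> (int \<Rightarrow> bool) \<Rightarrow> nat \<Rightarrow> int" where
  "hgt K \<omega> y m = (\<Sum>i<m. inc K (st K \<omega> y i) (col \<omega> i))"

definition V :: "int \<Rightarrow> (int \<times> int \<Rightarrow> bool) \<Rightarrow> (int \<Rightarrow> bool) \<Rightarrow> nat \<Rightarrow> int \<Rightarrow> int" where
  "V K \<omega> y m j = hgt K \<omega> y m + prof (st K \<omega> y m) j"

lemma st_states: "y \<in> tasep_states K \<Longrightarrow> st K \<omega> y m \<in> tasep_states K"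
  by (cases m) (auto simp: Supd_states)

lemma V_Suc:
  assumes "y \<in> tasep_states K" "K \<ge> 1" "-K \<le> j" "j \<le> K"
  shows "V K \<omega> y (Suc m) j = V K \<omega> y m j + 1 + 2 * fi K (st K \<omega> y m) (col \<omega> m) j"
  using prof_Supd[OF st_states[OF assms(1)] assms(2,3,4), of \<omega> m "col \<omega> m"]
  unfolding V_def hgt_def inc_def by simp

lemma V_0: "V K \<omega> y 0 j = prof y j" unfolding V_def hgt_def by simp

lemma fi_01: "fi K y c b = 0 \<or> fi K y c b = 1" unfolding fi_def by auto

lemma fi_1: "fi K y c b = 1 \<Longrightarrow> b \<in> tasep_active K y \<and> \<not> c b" unfolding fi_def Fs_def by (auto split: if_splits)
lemma fi_0: "fi K y c b = 0 \<Longrightarrow> b \<notin> tasep_active K y \<or> c b" unfolding fi_def Fs_def by (auto split: if_splits)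

lemma V_ge: "y \<in> tasep_states K \<Longrightarrow> K \<ge> 1 \<Longrightarrow> -K \<le> j \<Longrightarrow> j \<le> K \<Longrightarrow> V K \<omega> y m j \<ge> prof y j + int m"
proof (induction m)
  case 0 then show ?case by (simp add: V_0)
next
  case (Suc m)
  then show ?case using V_Suc[OF Suc.prems, of \<omega> m] fi_01[of K "st K \<omega> y m" "col \<omega> m" j] by auto
qed

lemma open_path_fst: "open_path K \<omega> x z L \<Longrightarrow> fst x \<le> fst z"
  by (induction rule: open_path.induct) (auto simp: cross_step_def)

lemma lower_aux:
  assumes "open_path K \<omega> x z L"
  shows "x = (0,0) \<Longrightarrow> s0 \<in> tasep_states K \<Longrightarrow> K \<ge> 1 \<Longrightarrow>
     0 \<le> fst z \<and> -K \<le> snd z \<and> snd z \<le> K \<and> V K \<omega> s0 (nat (fst z)) (snd z) \<le> int L"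
  using assms
proof (induction rule: open_path.induct)
  case (refl x)
  then show ?case by (simp add: V_0)
next
  case (step x u L z c)
  from step.IH step.prems have IH: "0 \<le> fst u" "-K \<le> snd u" "snd u \<le> K"
    "V K \<omega> s0 (nat (fst u)) (snd u) \<le> int L" by auto
  obtain i j where u: "u = (i,j)" by fastforce
  obtain i' j' where z: "z = (i',j')" by fastforce
  define m where "m = nat i"
  have im: "i = int m" using IH(1) u m_def by simp
  have cs: "cross_step K \<omega> (int m, j) (i', j') c" using step.hyps(2) u z im by simp
  have rng: "-K \<le> j'" "j' \<le> K" using cs unfolding cross_step_def by auto
  have jr: "-K \<le> j" "j \<le> K" using IH(2,3) u by auto
  have st: "st K \<omega> s0 m \<in> tasep_states K" using st_states step.prems by blast
  let ?y = "st K \<omega> s0 m" and ?c = "col \<omega> m"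
  have Vm: "V K \<omega> s0 m j \<le> int L" using IH(4) u im by simp
  from cs have "(i' = int m \<and> j' = j + 1 \<and> c = 1) \<or> (i' = int m + 1 \<and> j' = j \<and> \<omega> (int m, j) \<and> c = 1) \<or>
     (i' = int m + 1 \<and> (j' = j + 1 \<or> j' = j - 1) \<and> c = 2)" unfolding cross_step_def by auto
  then have "V K \<omega> s0 (nat i') j' \<le> V K \<omega> s0 m j + int c"
  proof (elim disjE)
    assume a: "i' = int m \<and> j' = j + 1 \<and> c = 1"
    then show ?thesis using prof_slope[of ?y j] unfolding V_def by auto
  next
    assume a: "i' = int m + 1 \<and> j' = j \<and> \<omega> (int m, j) \<and> c = 1"
    have "nat i' = Suc m" using a by simp
    moreover have "fi K ?y ?c j = 0" using a fi_1[of K ?y ?c j] fi_01[of K ?y ?c j] unfolding col_def by auto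
    ultimately show ?thesis using V_Suc[OF step.prems(2,3) jr, of \<omega> m] a by simp
  next
    assume a: "i' = int m + 1 \<and> (j' = j + 1 \<or> j' = j - 1) \<and> c = 2"
    have n: "nat i' = Suc m" using a by simp
    have VS: "V K \<omega> s0 (Suc m) j' = V K \<omega> s0 m j' + 1 + 2 * fi K ?y ?c j'"
      using V_Suc[OF step.prems(2,3) rng, of \<omega> m] .
    show ?thesis
    proof (cases "fi K ?y ?c j' = 1")
      case True
      then have act: "j' \<in> tasep_active K ?y" using fi_1 by blast
      have "prof ?y j = prof ?y j' + 1"
        using act_nbr[OF st step.prems(3) act] a jr by auto
      then show ?thesis using VS n True a unfolding V_def by simp
    next
      case False
      then have "fi K ?y ?c j' = 0" using fi_01 by blast
      moreover have "prof ?y j' \<le> prof ?y j + 1"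
        using a prof_slope[of ?y j] prof_slope[of ?y "j - 1"] by auto
      ultimately show ?thesis using VS n a unfolding V_def by simp
    qed
  qed
  moreover have "0 \<le> i'" using cs unfolding cross_step_def by auto
  ultimately show ?case using Vm z rng by simp
qed

lemma vert_path: "int k \<le> K \<Longrightarrow> open_path K \<omega> (0,0) (0, int k) k"
proof (induction k)
  case 0 then show ?case by (simp add: open_path.refl)
next
  case (Suc k)
  have "cross_step K \<omega> (0, int k) (0, int (Suc k)) 1"
    using Suc.prems unfolding cross_step_def by simp
  then show ?case using open_path.step[OF Suc.IH] Suc.prems by fastforce
qed

lemma reach:
  assumes "K \<ge> 1"
  shows "-K \<le> j \<Longrightarrow> j \<le> K \<Longrightarrow> j \<ge> - int m \<Longrightarrow> \<exists>L. open_path K \<omega> (0,0) (int m, j) L \<and> L \<le> 2 * m + nat K"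
proof (induction m arbitrary: j)
  case 0
  then have "open_path K \<omega> (0,0) (0, int (nat j)) (nat j)" using vert_path[of "nat j" K] by simp
  then show ?case using 0 by (intro exI[of _ "nat j"]) simp
next
  case (Suc m)
  show ?case
  proof (cases "j < K")
    case True
    then obtain L where L: "open_path K \<omega> (0,0) (int m, j+1) L" "L \<le> 2 * m + nat K"
      using Suc.IH[of "j+1"] Suc.prems by auto
    have "cross_step K \<omega> (int m, j+1) (int (Suc m), j) 2"
      using True Suc.prems unfolding cross_step_def by simp
    then have "open_path K \<omega> (0,0) (int (Suc m), j) (L + 2)" using open_path.step[OF L(1)] by blast
    then show ?thesis using L(2) by (intro exI[of _ "L+2"]) simp
  next
    case False
    then obtain L where L: "open_path K \<omega> (0,0) (int m, j-1) L" "L \<le> 2 * m + nat K"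
      using Suc.IH[of "j-1"] Suc.prems assms by auto
    have "cross_step K \<omega> (int m, j-1) (int (Suc m), j) 2"
      using False Suc.prems assms unfolding cross_step_def by simp
    then have "open_path K \<omega> (0,0) (int (Suc m), j) (L + 2)" using open_path.step[OF L(1)] by blast
    then show ?thesis using L(2) by (intro exI[of _ "L+2"]) simp
  qed
qed

lemma witness:
  assumes "s0 \<in> tasep_states K" "K \<ge> 1" "-K \<le> j" "j \<le> K"
  shows "\<exists>j' c. -K \<le> j' \<and> j' \<le> K \<and> cross_step K \<omega> (int m, j') (int m + 1, j) c \<and>
      V K \<omega> s0 (Suc m) j = V K \<omega> s0 m j' + int c"
proof -
  let ?y = "st K \<omega> s0 m" and ?c = "col \<omega> m"
  have st: "?y \<in> tasep_states K" using st_states assms(1) by blast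
  have VS: "V K \<omega> s0 (Suc m) j = V K \<omega> s0 m j + 1 + 2 * fi K ?y ?c j"
    using V_Suc[OF assms, of \<omega> m] .
  show ?thesis
  proof (cases "fi K ?y ?c j = 1")
    case True
    then have act: "j \<in> tasep_active K ?y" using fi_1 by blast
    note nb = act_nbr[OF st assms(2) act]
    show ?thesis
    proof (cases "j < K")
      case True
      have "cross_step K \<omega> (int m, j+1) (int m + 1, j) 2" using True assms unfolding cross_step_def by simp
      moreover have "V K \<omega> s0 (Suc m) j = V K \<omega> s0 m (j+1) + int 2"
        using VS nb True \<open>fi K ?y ?c j = 1\<close> unfolding V_def by simp
      ultimately show ?thesis using True assms by (intro exI[of _ "j+1"] exI[of _ 2]) simp
    next
      case False
      then have jk: "j > -K" using assms by simp
      have "cross_step K \<omega> (int m, j-1) (int m + 1, j) 2" using False assms unfolding cross_step_def by simp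
      moreover have "V K \<omega> s0 (Suc m) j = V K \<omega> s0 m (j-1) + int 2"
        using VS nb jk \<open>fi K ?y ?c j = 1\<close> unfolding V_def by simp
      ultimately show ?thesis using jk assms by (intro exI[of _ "j-1"] exI[of _ 2]) simp
    qed
  next
    case False
    then have f0: "fi K ?y ?c j = 0" using fi_01 by blast
    show ?thesis
    proof (cases "\<omega> (int m, j)")
      case True
      have "cross_step K \<omega> (int m, j) (int m + 1, j) 1" using True assms unfolding cross_step_def by simp
      then show ?thesis using VS f0 assms by (intro exI[of _ j] exI[of _ 1]) simp
    next
      case False
      then have "j \<notin> tasep_active K ?y" using fi_0[OF f0] unfolding col_def by auto
      then have nb: "(j > -K \<and> prof ?y (j-1) = prof ?y j - 1) \<or> (j < K \<and> prof ?y (j+1) = prof ?y j - 1)"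
        using nact_nbr[OF st assms(2,3,4)] by blast
      then show ?thesis
      proof (elim disjE)
        assume a: "j > -K \<and> prof ?y (j-1) = prof ?y j - 1"
        have "cross_step K \<omega> (int m, j-1) (int m + 1, j) 2" using a assms unfolding cross_step_def by simp
        moreover have "V K \<omega> s0 (Suc m) j = V K \<omega> s0 m (j-1) + int 2" using VS f0 a unfolding V_def by simp
        ultimately show ?thesis using a assms by (intro exI[of _ "j-1"] exI[of _ 2]) simp
      next
        assume a: "j < K \<and> prof ?y (j+1) = prof ?y j - 1"
        have "cross_step K \<omega> (int m, j+1) (int m + 1, j) 2" using a assms unfolding cross_step_def by simp
        moreover have "V K \<omega> s0 (Suc m) j = V K \<omega> s0 m (j+1) + int 2" using VS f0 a unfolding V_def by simp
        ultimately show ?thesis using a assms by (intro exI[of _ "j+1"] exI[of _ 2]) simp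
      qed
    qed
  qed
qed

lemma upper:
  assumes "s0 \<in> tasep_states K" "K \<ge> 1"
  shows "int m \<ge> K \<Longrightarrow> -K \<le> j \<Longrightarrow> j \<le> K \<Longrightarrow>
    \<exists>L. open_path K \<omega> (0,0) (int m, j) L \<and> int L \<le> V K \<omega> s0 m j + 3 * K"
proof (induction m arbitrary: j)
  case 0 then show ?case using assms by simp
next
  case (Suc m)
  show ?case
  proof (cases "int m \<ge> K")
    case True
    obtain j' c where w: "-K \<le> j'" "j' \<le> K" "cross_step K \<omega> (int m, j') (int m + 1, j) c"
      "V K \<omega> s0 (Suc m) j = V K \<omega> s0 m j' + int c"
      using witness[OF assms Suc.prems(2,3), of \<omega> m] by blast
    obtain L where L: "open_path K \<omega> (0,0) (int m, j') L" "int L \<le> V K \<omega> s0 m j' + 3 * K"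
      using Suc.IH[OF True w(1,2)] by blast
    have p: "open_path K \<omega> (0,0) (int m + 1, j) (L + c)" using open_path.step[OF L(1) w(3)] .
    have e: "int (Suc m) = int m + 1" by simp
    show ?thesis unfolding e using p L(2) w(4) by auto
  next
    case False
    then have mk: "int (Suc m) = K" using Suc.prems by simp
    obtain L where L: "open_path K \<omega> (0,0) (int (Suc m), j) L" "L \<le> 2 * Suc m + nat K"
      using reach[OF assms(2), of j "Suc m" \<omega>] Suc.prems mk by auto
    have "V K \<omega> s0 (Suc m) j \<ge> prof s0 j + int (Suc m)" using V_ge[OF assms Suc.prems(2,3)] .
    moreover have "\<bar>prof s0 j\<bar> \<le> \<bar>j\<bar>" by (rule prof_bound)
    ultimately have "V K \<omega> s0 (Suc m) j \<ge> 0" using Suc.prems mk by auto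
    moreover have "int L \<le> 3 * K"
    proof -
      have a: "int L \<le> int (2 * Suc m + nat K)" using L(2) by (simp only: of_nat_le_iff)
      have b: "int (2 * Suc m + nat K) = 2 * int (Suc m) + K" using assms(2) by simp
      show ?thesis using a unfolding b mk by linarith
    qed
    ultimately show ?thesis using L(1) by (intro exI[of _ L]) simp
  qed
qed

lemma dist_bounds:
  assumes "s0 \<in> tasep_states K" "K \<ge> 1" "int n \<ge> K"
  shows "V K \<omega> s0 n 0 \<le> int (cross_dist K \<omega> (int n, 0)) \<and>
         int (cross_dist K \<omega> (int n, 0)) \<le> V K \<omega> s0 n 0 + 3 * K"
proof -
  obtain L where L: "open_path K \<omega> (0,0) (int n, 0) L" "int L \<le> V K \<omega> s0 n 0 + 3 * K"
    using upper[OF assms(1,2) assms(3), of 0 \<omega>] assms(2) by auto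
  have le: "cross_dist K \<omega> (int n, 0) \<le> L" unfolding cross_dist_def using L(1) by (rule Least_le)
  have op: "open_path K \<omega> (0,0) (int n, 0) (cross_dist K \<omega> (int n, 0))"
    unfolding cross_dist_def using L(1) by (rule LeastI)
  have "V K \<omega> s0 (nat (int n)) 0 \<le> int (cross_dist K \<omega> (int n, 0))"
    using lower_aux[OF op] assms by simp
  then show ?thesis using le L(2) by simp
qed

lemma PiM_all_sets:
  fixes pq :: "bool pmf"
  assumes "finite J" "X \<subseteq> space (PiM J (\<lambda>_. measure_pmf pq))"
  shows "X \<in> sets (PiM J (\<lambda>_. measure_pmf pq))"
proof -
  have sp: "space (PiM J (\<lambda>_. measure_pmf pq)) = PiE J (\<lambda>_. UNIV)" by (simp add: space_PiM)
  have fin: "finite X"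
  proof (rule finite_subset)
    show "X \<subseteq> PiE J (\<lambda>_. UNIV)" using assms(2) unfolding sp .
    show "finite (PiE J (\<lambda>_. UNIV :: bool set))" using assms(1) by (intro finite_PiE) auto
  qed
  have "X = (\<Union>x\<in>X. PiE J (\<lambda>i. {x i}))"
  proof -
    have "PiE J (\<lambda>i. {x i}) = {x}" if "x \<in> X" for x
      using that assms(2) by (intro PiE_singleton) (auto simp: sp PiE_def)
    then show ?thesis by auto
  qed
  also have "\<dots> \<in> sets (PiM J (\<lambda>_. measure_pmf pq))"
    using fin assms(1) by (intro sets.finite_UN sets_PiM_I_finite) auto
  finally show ?thesis .
qed

lemma PiM_all_meas:
  fixes pq :: "bool pmf" and g :: "_ \<Rightarrow> real"
  assumes "finite J"
  shows "g \<in> borel_measurable (PiM J (\<lambda>_. measure_pmf pq))"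
  by (rule borel_measurableI, rule PiM_all_sets[OF assms]) auto

lemma distr_Pi_pmf:
  fixes pq :: "bool pmf"
  assumes fin: "finite J"
  shows "distr (measure_pmf (Pi_pmf J False (\<lambda>_. pq))) (PiM J (\<lambda>_. measure_pmf pq)) (\<lambda>x. restrict x J)
     = PiM J (\<lambda>_. measure_pmf pq)"
proof -
  interpret product_prob_space "\<lambda>_. measure_pmf pq" J
    by (rule product_prob_spaceI) (rule measure_pmf.prob_space_axioms)
  show ?thesis
  proof (rule PiM_eqI)
    show "finite J" by fact
    show "sets (distr (measure_pmf (Pi_pmf J False (\<lambda>_. pq))) (PiM J (\<lambda>_. measure_pmf pq)) (\<lambda>x. restrict x J)) = sets (PiM J (\<lambda>_. measure_pmf pq))"
      by simp
  next
    fix A assume A: "\<And>i. i \<in> J \<Longrightarrow> A i \<in> sets (measure_pmf pq)"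
    have "Pi\<^sub>E J A \<in> sets (PiM J (\<lambda>_. measure_pmf pq))"
      using A by (intro sets_PiM_I_finite fin) auto
    hence "emeasure (distr (measure_pmf (Pi_pmf J False (\<lambda>_. pq))) (PiM J (\<lambda>_. measure_pmf pq)) (\<lambda>x. restrict x J)) (Pi\<^sub>E J A) =
           emeasure (measure_pmf (Pi_pmf J False (\<lambda>_. pq))) ((\<lambda>x. restrict x J) -` Pi\<^sub>E J A)"
      by (subst emeasure_distr) (auto simp: space_PiM)
    also have "\<dots> = emeasure (measure_pmf (Pi_pmf J False (\<lambda>_. pq))) (PiE_dflt J False A)"
    proof (intro emeasure_eq_AE AE_pmfI)
      fix x assume "x \<in> set_pmf (Pi_pmf J False (\<lambda>_. pq))"
      then have out: "\<forall>y. y \<notin> J \<longrightarrow> x y = False" using set_Pi_pmf_subset[OF fin, of False "\<lambda>_. pq"] by blast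
      show "(x \<in> (\<lambda>x. restrict x J) -` Pi\<^sub>E J A) = (x \<in> PiE_dflt J False A)"
        using out unfolding PiE_dflt_def by (auto simp: restrict_PiE_iff)
    qed auto
    also have "\<dots> = (\<Prod>i\<in>J. emeasure (measure_pmf pq) (A i))"
      by (simp add: measure_pmf.emeasure_eq_measure measure_Pi_pmf_PiE_dflt fin prod_ennreal)
    finally show "emeasure (distr (measure_pmf (Pi_pmf J False (\<lambda>_. pq))) (PiM J (\<lambda>_. measure_pmf pq)) (\<lambda>x. restrict x J)) (Pi\<^sub>E J A) =
           (\<Prod>i\<in>J. emeasure (measure_pmf pq) (A i))" .
  qed
qed

definition dep :: "(int \<times> int) set \<Rightarrow> ((int \<times> int \<Rightarrow> bool) \<Rightarrow> 'b) \<Rightarrow> bool" where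
  "dep J f \<longleftrightarrow> (\<forall>\<omega> \<omega>'. (\<forall>e\<in>J. \<omega> e = \<omega>' e) \<longrightarrow> f \<omega> = f \<omega>')"

lemma bridge:
  fixes pq :: "bool pmf" and f :: "(int \<times> int \<Rightarrow> bool) \<Rightarrow> real"
  assumes fin: "finite J" and d: "dep J f"
  shows "(\<integral>\<omega>. f \<omega> \<partial>(PiM UNIV (\<lambda>_. measure_pmf pq))) = (\<integral>\<omega>. f \<omega> \<partial>measure_pmf (Pi_pmf J False (\<lambda>_. pq)))"
proof -
  interpret product_prob_space "\<lambda>_. measure_pmf pq" UNIV
    by (rule product_prob_spaceI) (rule measure_pmf.prob_space_axioms)
  define g where "g x = f (\<lambda>e. if e \<in> J then x e else False)" for x
  have fg: "f \<omega> = g (restrict \<omega> J)" for \<omega>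
  proof -
    have "\<forall>e\<in>J. \<omega> e = (\<lambda>e. if e \<in> J then restrict \<omega> J e else False) e" by simp
    moreover note d[unfolded dep_def, THEN spec[of _ \<omega>], THEN spec[of _ "\<lambda>e. if e \<in> J then restrict \<omega> J e else False"]]
    ultimately show ?thesis unfolding g_def by (rule rev_mp)
  qed
  have gm: "g \<in> borel_measurable (PiM J (\<lambda>_. measure_pmf pq))" by (rule PiM_all_meas[OF fin])
  have "(\<integral>\<omega>. f \<omega> \<partial>(PiM UNIV (\<lambda>_. measure_pmf pq))) = (\<integral>\<omega>. g (restrict \<omega> J) \<partial>(PiM UNIV (\<lambda>_. measure_pmf pq)))"
    using fg by simp
  also have "\<dots> = (\<integral>x. g x \<partial>distr (PiM UNIV (\<lambda>_. measure_pmf pq)) (PiM J (\<lambda>_. measure_pmf pq)) (\<lambda>\<omega>. restrict \<omega> J))"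
    by (rule integral_distr[symmetric, OF measurable_restrict_subset gm]) simp
  also have "\<dots> = (\<integral>x. g x \<partial>PiM J (\<lambda>_. measure_pmf pq))"
    using distr_PiM_restrict_finite[OF fin] by simp
  also have "\<dots> = (\<integral>x. g x \<partial>distr (measure_pmf (Pi_pmf J False (\<lambda>_. pq))) (PiM J (\<lambda>_. measure_pmf pq)) (\<lambda>x. restrict x J))"
    using distr_Pi_pmf[OF fin, of pq] by simp
  also have "\<dots> = (\<integral>\<omega>. g (restrict \<omega> J) \<partial>measure_pmf (Pi_pmf J False (\<lambda>_. pq)))"
    by (rule integral_distr[OF _ gm]) (auto simp: space_PiM)
  also have "\<dots> = (\<integral>\<omega>. f \<omega> \<partial>measure_pmf (Pi_pmf J False (\<lambda>_. pq)))"
    using fg by simp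
  finally show ?thesis .
qed

definition Jn :: "int \<Rightarrow> nat \<Rightarrow> (int \<times> int) set" where
  "Jn K n = {(i,j). 0 \<le> i \<and> i < int n \<and> -K \<le> j \<and> j \<le> K}"
definition Cl :: "int \<Rightarrow> nat \<Rightarrow> (int \<times> int) set" where
  "Cl K m = {(i,j). i = int m \<and> -K \<le> j \<and> j \<le> K}"
definition Q :: "int \<Rightarrow> real \<Rightarrow> nat \<Rightarrow> (int \<times> int \<Rightarrow> bool) pmf" where
  "Q K \<epsilon> n = Pi_pmf (Jn K n) False (\<lambda>_. bernoulli_pmf (1 - \<epsilon>))"
definition CC :: "int \<Rightarrow> real \<Rightarrow> (int \<Rightarrow> bool) pmf" where
  "CC K \<epsilon> = Pi_pmf {-K..K} False (\<lambda>_. bernoulli_pmf (1 - \<epsilon>))"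

lemma finite_Jn: "finite (Jn K n)"
proof (rule finite_subset)
  show "Jn K n \<subseteq> {0..<int n} \<times> {-K..K}" unfolding Jn_def by auto
qed auto

lemma finite_Cl: "finite (Cl K n)"
proof (rule finite_subset)
  show "Cl K n \<subseteq> {int n} \<times> {-K..K}" unfolding Cl_def by auto
qed auto

lemma Jn_Suc: "Jn K (Suc m) = Jn K m \<union> Cl K m" unfolding Jn_def Cl_def by auto
lemma Jn_Cl_disj: "Jn K m \<inter> Cl K m = {}" unfolding Jn_def Cl_def by auto

lemma fin_supp:
  fixes p :: "bool pmf"
  assumes "finite A"
  shows "finite (set_pmf (Pi_pmf A False (\<lambda>_. p)))"
proof (rule finite_subset)
  show "set_pmf (Pi_pmf A False (\<lambda>_. p)) \<subseteq> (\<lambda>S x. x \<in> S) ` Pow A"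
  proof
    fix f assume "f \<in> set_pmf (Pi_pmf A False (\<lambda>_. p))"
    then have out: "\<forall>x. x \<notin> A \<longrightarrow> f x = False" using set_Pi_pmf_subset[OF assms, of False "\<lambda>_. p"] by blast
    have "f = (\<lambda>x. x \<in> {x\<in>A. f x})" using out by auto
    then show "f \<in> (\<lambda>S x. x \<in> S) ` Pow A" by blast
  qed
  show "finite ((\<lambda>S x. x \<in> S) ` Pow A)" using assms by simp
qed

lemma integral_pair_pmf_fin:
  fixes F :: "'a \<times> 'b \<Rightarrow> real"
  assumes "finite (set_pmf A)" "finite (set_pmf B)"
  shows "(\<integral>x. F x \<partial>pair_pmf A B) = (\<integral>a. (\<integral>b. F (a,b) \<partial>B) \<partial>A)"
proof -
  have "(\<integral>x. F x \<partial>pair_pmf A B) = (\<Sum>x\<in>set_pmf A \<times> set_pmf B. F x * pmf (pair_pmf A B) x)"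
    using assms by (intro integral_measure_pmf_real) auto
  also have "\<dots> = (\<Sum>(a,b)\<in>set_pmf A \<times> set_pmf B. F (a,b) * (pmf A a * pmf B b))"
    by (intro sum.cong HOL.refl) (auto simp: pmf_pair)
  also have "\<dots> = (\<Sum>a\<in>set_pmf A. \<Sum>b\<in>set_pmf B. F (a,b) * (pmf A a * pmf B b))"
    by (rule sum.cartesian_product[symmetric])
  also have "\<dots> = (\<Sum>a\<in>set_pmf A. (\<Sum>b\<in>set_pmf B. F (a,b) * pmf B b) * pmf A a)"
    by (simp add: sum_distrib_left mult_ac)
  also have "\<dots> = (\<Sum>a\<in>set_pmf A. (\<integral>b. F (a,b) \<partial>B) * pmf A a)"
    using assms by (intro sum.cong HOL.refl, subst integral_measure_pmf_real[of "set_pmf B"]) auto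
  also have "\<dots> = (\<integral>a. (\<integral>b. F (a,b) \<partial>B) \<partial>A)"
    using assms by (intro integral_measure_pmf_real[symmetric]) auto
  finally show ?thesis .
qed

lemma Supd_cong:
  assumes "K \<ge> 0" "\<And>b. -K \<le> b \<Longrightarrow> b \<le> K \<Longrightarrow> c b = c' b"
  shows "Supd K y c = Supd K y c'"
proof -
  have "Fs K y c = Fs K y c'" unfolding Fs_def using assms active_range[OF assms(1)] by blast
  then show ?thesis unfolding Supd_def by simp
qed

lemma fi_cong:
  assumes "K \<ge> 0" "\<And>b. -K \<le> b \<Longrightarrow> b \<le> K \<Longrightarrow> c b = c' b"
  shows "fi K y c x = fi K y c' x"
proof -
  have "Fs K y c = Fs K y c'" unfolding Fs_def using assms active_range[OF assms(1)] by blast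
  then show ?thesis unfolding fi_def by simp
qed

lemma st_agree:
  assumes "K \<ge> 0"
  shows "(\<forall>e\<in>Jn K m. \<omega> e = \<omega>' e) \<Longrightarrow> st K \<omega> y m = st K \<omega>' y m"
proof (induction m)
  case (Suc m)
  have "\<forall>e\<in>Jn K m. \<omega> e = \<omega>' e" using Suc.prems unfolding Jn_Suc by blast
  then have "st K \<omega> y m = st K \<omega>' y m" by (rule Suc.IH)
  moreover have "Supd K (st K \<omega>' y m) (col \<omega> m) = Supd K (st K \<omega>' y m) (col \<omega>' m)"
    using Suc.prems assms by (intro Supd_cong) (auto simp: col_def Jn_Suc Cl_def)
  ultimately show ?case by simp
qed simp

lemma union_step:
  fixes h :: "(int \<Rightarrow> bool) \<Rightarrow> (int \<Rightarrow> bool) \<Rightarrow> real"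
  assumes K: "K \<ge> 0" and hc: "\<And>y c c'. (\<And>b. -K \<le> b \<Longrightarrow> b \<le> K \<Longrightarrow> c b = c' b) \<Longrightarrow> h y c = h y c'"
  shows "(\<integral>\<omega>. h (st K \<omega> y m) (col \<omega> m) \<partial>Q K \<epsilon> (Suc m)) =
         (\<integral>\<omega>. (\<integral>c. h (st K \<omega> y m) c \<partial>CC K \<epsilon>) \<partial>Q K \<epsilon> m)"
proof -
  let ?p = "bernoulli_pmf (1 - \<epsilon>)"
  let ?mg = "\<lambda>(f,g) x. if x \<in> Jn K m then f x else g x"
  let ?R = "Pi_pmf (Cl K m) False (\<lambda>_. ?p)"
  have QS: "Q K \<epsilon> (Suc m) = map_pmf ?mg (pair_pmf (Q K \<epsilon> m) ?R)"
    unfolding Q_def Jn_Suc by (rule Pi_pmf_union[OF finite_Jn finite_Cl Jn_Cl_disj])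
  have CCm: "CC K \<epsilon> = map_pmf (\<lambda>g. g \<circ> (\<lambda>j. (int m, j))) ?R"
    unfolding CC_def
  proof (rule Pi_pmf_bij_betw)
    show "bij_betw (\<lambda>j. (int m, j)) {- K..K} (Cl K m)"
      unfolding Cl_def by (rule bij_betwI[of _ _ _ snd]) auto
  qed (auto simp: Cl_def)
  have pt: "h (st K (?mg (f,g)) y m) (col (?mg (f,g)) m) = h (st K f y m) (col g m)" for f g
  proof -
    have "st K (?mg (f,g)) y m = st K f y m" using K by (intro st_agree) auto
    moreover have "h (st K f y m) (col (?mg (f,g)) m) = h (st K f y m) (col g m)"
      by (intro hc) (auto simp: col_def Jn_def)
    ultimately show ?thesis by simp
  qed
  have "(\<integral>\<omega>. h (st K \<omega> y m) (col \<omega> m) \<partial>Q K \<epsilon> (Suc m)) =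
        (\<integral>x. h (st K (?mg x) y m) (col (?mg x) m) \<partial>pair_pmf (Q K \<epsilon> m) ?R)"
    unfolding QS by simp
  also have "\<dots> = (\<integral>x. h (st K (fst x) y m) (col (snd x) m) \<partial>pair_pmf (Q K \<epsilon> m) ?R)"
  proof (rule Bochner_Integration.integral_cong[OF HOL.refl])
    fix x :: "(int \<times> int \<Rightarrow> bool) \<times> (int \<times> int \<Rightarrow> bool)"
    obtain f g where x: "x = (f,g)" by fastforce
    show "h (st K (?mg x) y m) (col (?mg x) m) = h (st K (fst x) y m) (col (snd x) m)"
      unfolding x fst_conv snd_conv by (rule pt)
  qed
  also have "\<dots> = (\<integral>f. (\<integral>g. h (st K f y m) (col g m) \<partial>?R) \<partial>Q K \<epsilon> m)"
    unfolding Q_def using integral_pair_pmf_fin[OF fin_supp[OF finite_Jn] fin_supp[OF finite_Cl],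
      where F="\<lambda>x. h (st K (fst x) y m) (col (snd x) m)"] by simp
  also have "\<dots> = (\<integral>\<omega>. (\<integral>c. h (st K \<omega> y m) c \<partial>CC K \<epsilon>) \<partial>Q K \<epsilon> m)"
    unfolding CCm by (simp add: col_def o_def)
  finally show ?thesis .
qed

lemma finite_states: "finite (tasep_states K)"
proof (rule finite_subset)
  show "tasep_states K \<subseteq> (\<lambda>S x. x \<in> S) ` Pow {-K+1..K}"
  proof
    fix y assume "y \<in> tasep_states K"
    then have "y = (\<lambda>x. x \<in> {x\<in>{-K+1..K}. y x})" unfolding tasep_states_def by auto
    then show "y \<in> (\<lambda>S x. x \<in> S) ` Pow {-K+1..K}" by blast
  qed
qed simp

lemma update_states: "tasep_update K y F \<in> tasep_states K"
  unfolding tasep_update_def tasep_states_def by auto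

lemma trans_id:
  fixes \<phi> :: "(int \<Rightarrow> bool) \<Rightarrow> real"
  assumes y: "y \<in> tasep_states K" and K: "K \<ge> 0" and e: "0 < \<epsilon>" "\<epsilon> < 1"
  shows "(\<integral>c. \<phi> (Supd K y c) \<partial>CC K \<epsilon>) = (\<Sum>y'\<in>tasep_states K. tasep_P K \<epsilon> y y' * \<phi> y')"
proof -
  define A where "A = tasep_active K y"
  define p where "p = bernoulli_pmf (1 - \<epsilon>)"
  define Fm where "Fm c = {b\<in>A. \<not> c b}" for c :: "int \<Rightarrow> bool"
  define PA where "PA = Pi_pmf A False (\<lambda>_. p)"
  define \<psi> where "\<psi> F = \<phi> (tasep_update K y F)" for F
  define w where "w F = \<epsilon> ^ card F * (1 - \<epsilon>) ^ (card A - card F)" for F :: "int set"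
  have AK: "A \<subseteq> {-K..K}" unfolding A_def using active_range[OF K] by auto
  have finA: "finite A" using AK finite_subset by blast
  have sp: "set_pmf p = UNIV" unfolding p_def using e by simp
  have Sup: "Supd K y c = tasep_update K y (Fm c)" for c unfolding Supd_def Fs_def Fm_def A_def by simp
  have PAeq: "PA = map_pmf (\<lambda>f x. if x \<in> A then f x else False) (CC K \<epsilon>)"
    unfolding PA_def CC_def p_def by (rule Pi_pmf_subset[OF _ AK]) simp
  have mapeq: "map_pmf Fm (CC K \<epsilon>) = map_pmf Fm PA"
  proof -
    have c: "Fm \<circ> (\<lambda>f x. if x \<in> A then f x else False) = Fm" by (auto simp: fun_eq_iff Fm_def)
    show ?thesis unfolding PAeq pmf.map_comp c ..
  qed
  have setPA: "set_pmf PA = {f. \<forall>x. x \<notin> A \<longrightarrow> f x = False}"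
    unfolding PA_def using set_Pi_pmf[OF finA, of False "\<lambda>_. p"] sp by (auto simp: PiE_dflt_def)
  have inj: "inj_on Fm (set_pmf PA)"
  proof (rule inj_onI)
    fix f g assume f: "f \<in> set_pmf PA" and g: "g \<in> set_pmf PA" and eq: "Fm f = Fm g"
    show "f = g"
    proof (rule ext)
      fix x show "f x = g x"
      proof (cases "x \<in> A")
        case True then have "(x \<in> Fm f) = (x \<in> Fm g)" using eq by simp
        then show ?thesis using True unfolding Fm_def by auto
      next
        case False then show ?thesis using f g unfolding setPA by auto
      qed
    qed
  qed
  have pmfG: "pmf (map_pmf Fm PA) F = w F" if F: "F \<subseteq> A" for F
  proof -
    define xF where "xF b = (b \<in> A \<and> b \<notin> F)" for b
    have FxF: "Fm xF = F" unfolding Fm_def xF_def using F by auto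
    have xin: "xF \<in> set_pmf PA" unfolding setPA xF_def by auto
    have "pmf (map_pmf Fm PA) F = pmf PA xF" using pmf_map_inj[OF inj xin] FxF by simp
    also have "\<dots> = (\<Prod>b\<in>A. pmf p (xF b))"
      unfolding PA_def by (subst pmf_Pi[OF finA]) (auto simp: xF_def)
    also have "\<dots> = (\<Prod>b\<in>A. if b \<in> F then \<epsilon> else 1 - \<epsilon>)"
      unfolding p_def xF_def using e by (intro prod.cong HOL.refl) auto
    also have "\<dots> = (\<Prod>b\<in>A \<inter> {b. b \<in> F}. \<epsilon>) * (\<Prod>b\<in>A \<inter> - {b. b \<in> F}. 1 - \<epsilon>)"
      by (rule prod.If_cases[OF finA])
    also have "\<dots> = \<epsilon> ^ card F * (1 - \<epsilon>) ^ card (A - F)"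
    proof -
      have "A \<inter> {b. b \<in> F} = F" using F by auto
      moreover have "A \<inter> - {b. b \<in> F} = A - F" by auto
      ultimately show ?thesis by simp
    qed
    also have "card (A - F) = card A - card F" using F finA by (simp add: card_Diff_subset finite_subset)
    finally show ?thesis unfolding w_def .
  qed
  have "(\<integral>c. \<phi> (Supd K y c) \<partial>CC K \<epsilon>) = (\<integral>c. \<psi> (Fm c) \<partial>CC K \<epsilon>)"
    unfolding Sup \<psi>_def by simp
  also have "\<dots> = (\<integral>F. \<psi> F \<partial>map_pmf Fm (CC K \<epsilon>))" by simp
  also have "\<dots> = (\<integral>F. \<psi> F \<partial>map_pmf Fm PA)" unfolding mapeq ..
  also have "\<dots> = (\<Sum>F\<in>Pow A. \<psi> F * pmf (map_pmf Fm PA) F)"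
    by (rule integral_measure_pmf_real) (auto simp: finA Fm_def)
  also have "\<dots> = (\<Sum>F\<in>Pow A. w F * \<phi> (tasep_update K y F))"
    using pmfG by (intro sum.cong HOL.refl) (auto simp: \<psi>_def)
  also have "\<dots> = (\<Sum>F\<in>Pow A. \<Sum>y'\<in>tasep_states K. if tasep_update K y F = y' then w F * \<phi> y' else 0)"
    using update_states finite_states by (intro sum.cong HOL.refl) (simp add: sum.delta)
  also have "\<dots> = (\<Sum>y'\<in>tasep_states K. \<Sum>F\<in>Pow A. if tasep_update K y F = y' then w F * \<phi> y' else 0)"
    by (rule sum.swap)
  also have "\<dots> = (\<Sum>y'\<in>tasep_states K. tasep_P K \<epsilon> y y' * \<phi> y')"
    unfolding tasep_P_def A_def[symmetric] w_def
    by (intro sum.cong HOL.refl) (auto simp: sum_distrib_right intro!: sum.cong)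
  finally show ?thesis .
qed

lemma inc_exp:
  assumes K: "K \<ge> 1" and e: "0 < \<epsilon>" "\<epsilon> < 1"
  shows "(\<integral>c. real_of_int (inc K y c) \<partial>CC K \<epsilon>) = 1 + 2 * \<epsilon> * (if y 0 \<and> \<not> y 1 then 1 else 0)"
proof -
  define a where "a = (0 \<in> tasep_active K y)"
  have a: "a = (y 0 \<and> \<not> y 1)" unfolding a_def tasep_active_def using K by auto
  define g where "g b = 1 + 2 * (if a \<and> \<not> b then 1 else 0 :: real)" for b
  have "(\<integral>c. real_of_int (inc K y c) \<partial>CC K \<epsilon>) = (\<integral>c. g (c 0) \<partial>CC K \<epsilon>)"
    unfolding inc_def fi_def Fs_def g_def a_def by (intro Bochner_Integration.integral_cong[OF HOL.refl]) auto
  also have "\<dots> = (\<integral>b. g b \<partial>map_pmf (\<lambda>c. c 0) (CC K \<epsilon>))" by simp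
  also have "map_pmf (\<lambda>c. c 0) (CC K \<epsilon>) = bernoulli_pmf (1 - \<epsilon>)"
    unfolding CC_def using K by (subst Pi_pmf_component) auto
  also have "(\<integral>b. g b \<partial>bernoulli_pmf (1 - \<epsilon>)) = g True * (1 - \<epsilon>) + g False * \<epsilon>"
    using e by simp
  also have "\<dots> = 1 + 2 * \<epsilon> * (if y 0 \<and> \<not> y 1 then 1 else 0)"
    unfolding g_def a by (auto simp: algebra_simps)
  finally show ?thesis .
qed

lemma stat_iter:
  fixes \<phi> :: "(int \<Rightarrow> bool) \<Rightarrow> real"
  assumes st: "tasep_stationary K \<epsilon> \<nu>" and K: "K \<ge> 0" and e: "0 < \<epsilon>" "\<epsilon> < 1"
  shows "(\<Sum>y\<in>tasep_states K. \<nu> y * (\<integral>\<omega>. \<phi> (st K \<omega> y m) \<partial>Q K \<epsilon> m)) = (\<Sum>y\<in>tasep_states K. \<nu> y * \<phi> y)"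
proof (induction m arbitrary: \<phi>)
  case 0
  have "(\<integral>\<omega>. \<phi> y \<partial>measure_pmf (Q K \<epsilon> 0)) = \<phi> y" for y
    by (simp add: measure_pmf.prob_space)
  then show ?case by simp
next
  case (Suc m)
  define H where "H y' = (\<integral>c. \<phi> (Supd K y' c) \<partial>CC K \<epsilon>)" for y'
  have "(\<integral>\<omega>. \<phi> (st K \<omega> y (Suc m)) \<partial>Q K \<epsilon> (Suc m)) = (\<integral>\<omega>. H (st K \<omega> y m) \<partial>Q K \<epsilon> m)" for y
  proof -
    have "(\<integral>\<omega>. \<phi> (st K \<omega> y (Suc m)) \<partial>Q K \<epsilon> (Suc m)) = (\<integral>\<omega>. \<phi> (Supd K (st K \<omega> y m) (col \<omega> m)) \<partial>Q K \<epsilon> (Suc m))"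
      by simp
    also have "\<dots> = (\<integral>\<omega>. H (st K \<omega> y m) \<partial>Q K \<epsilon> m)"
      unfolding H_def
    proof (rule union_step[OF K, where h="\<lambda>y' c. \<phi> (Supd K y' c)"])
      fix y' and c c' :: "int \<Rightarrow> bool" assume "\<And>b. - K \<le> b \<Longrightarrow> b \<le> K \<Longrightarrow> c b = c' b"
      then have "Supd K y' c = Supd K y' c'" by (rule Supd_cong[OF K])
      then show "\<phi> (Supd K y' c) = \<phi> (Supd K y' c')" by simp
    qed
    finally show ?thesis .
  qed
  then have "(\<Sum>y\<in>tasep_states K. \<nu> y * (\<integral>\<omega>. \<phi> (st K \<omega> y (Suc m)) \<partial>Q K \<epsilon> (Suc m)))
      = (\<Sum>y\<in>tasep_states K. \<nu> y * (\<integral>\<omega>. H (st K \<omega> y m) \<partial>Q K \<epsilon> m))" by simp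
  also have "\<dots> = (\<Sum>y\<in>tasep_states K. \<nu> y * H y)" by (rule Suc.IH)
  also have "\<dots> = (\<Sum>y\<in>tasep_states K. \<nu> y * (\<Sum>y'\<in>tasep_states K. tasep_P K \<epsilon> y y' * \<phi> y'))"
    unfolding H_def by (intro sum.cong HOL.refl arg_cong[where f="\<lambda>x. \<nu> _ * x"] trans_id[OF _ K e])
  also have "\<dots> = (\<Sum>y'\<in>tasep_states K. (\<Sum>y\<in>tasep_states K. \<nu> y * tasep_P K \<epsilon> y y') * \<phi> y')"
  proof -
    have "(\<Sum>y\<in>tasep_states K. \<nu> y * (\<Sum>y'\<in>tasep_states K. tasep_P K \<epsilon> y y' * \<phi> y'))
       = (\<Sum>y\<in>tasep_states K. \<Sum>y'\<in>tasep_states K. \<nu> y * tasep_P K \<epsilon> y y' * \<phi> y')"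
      by (simp add: sum_distrib_left mult_ac)
    also have "\<dots> = (\<Sum>y'\<in>tasep_states K. \<Sum>y\<in>tasep_states K. \<nu> y * tasep_P K \<epsilon> y y' * \<phi> y')"
      by (rule sum.swap)
    also have "\<dots> = (\<Sum>y'\<in>tasep_states K. (\<Sum>y\<in>tasep_states K. \<nu> y * tasep_P K \<epsilon> y y') * \<phi> y')"
      by (simp add: sum_distrib_right)
    finally show ?thesis .
  qed
  also have "\<dots> = (\<Sum>y'\<in>tasep_states K. \<nu> y' * \<phi> y')"
    using st unfolding tasep_stationary_def by simp
  finally show ?case .
qed

lemma open_path_agree:
  assumes "open_path K \<omega> x z L"
  shows "(\<forall>e. fst x \<le> fst e \<and> fst e < fst z \<and> -K \<le> snd e \<and> snd e \<le> K \<longrightarrow> \<omega> e = \<omega>' e) \<Longrightarrow> open_path K \<omega>' x z L"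
  using assms
proof (induction rule: open_path.induct)
  case (refl x) show ?case by (rule open_path.refl)
next
  case (step x u L z c)
  have fu: "fst x \<le> fst u" using open_path_fst[OF step.hyps(1)] .
  have uz: "fst u \<le> fst z" using step.hyps(2) unfolding cross_step_def by auto
  have "open_path K \<omega>' x u L" using step.IH step.prems uz by force
  moreover have "cross_step K \<omega>' u z c"
  proof -
    have "\<omega> u = \<omega>' u" if "fst z = fst u + 1" "-K \<le> snd u" "snd u \<le> K"
      using step.prems[rule_format, of u] fu that by auto
    then show ?thesis using step.hyps(2) unfolding cross_step_def by auto
  qed
  ultimately show ?case by (rule open_path.step)
qed

lemma dep_mono: "dep J f \<Longrightarrow> J \<subseteq> J' \<Longrightarrow> dep J' f"
  unfolding dep_def by blast

lemma dep_dist: "dep (Jn K n) (\<lambda>\<omega>. real (cross_dist K \<omega> (int n, 0)))"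
  unfolding dep_def
proof (intro allI impI)
  fix \<omega> \<omega>' :: "int \<times> int \<Rightarrow> bool" assume a: "\<forall>e\<in>Jn K n. \<omega> e = \<omega>' e"
  have "open_path K \<omega> (0,0) (int n, 0) L = open_path K \<omega>' (0,0) (int n, 0) L" for L
  proof
    assume "open_path K \<omega> (0,0) (int n, 0) L"
    then show "open_path K \<omega>' (0,0) (int n, 0) L"
      by (rule open_path_agree) (use a in \<open>auto simp: Jn_def\<close>)
  next
    assume "open_path K \<omega>' (0,0) (int n, 0) L"
    then show "open_path K \<omega> (0,0) (int n, 0) L"
      by (rule open_path_agree) (use a in \<open>auto simp: Jn_def\<close>)
  qed
  then have "open_path K \<omega> (0,0) (int n, 0) = open_path K \<omega>' (0,0) (int n, 0)" by (rule ext)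
  then show "real (cross_dist K \<omega> (int n, 0)) = real (cross_dist K \<omega>' (int n, 0))"
    unfolding cross_dist_def by simp
qed

lemma dep_inc:
  assumes K: "K \<ge> 1" and i: "i < n"
  shows "dep (Jn K n) (\<lambda>\<omega>. real_of_int (inc K (st K \<omega> y i) (col \<omega> i)))"
  unfolding dep_def
proof (intro allI impI)
  fix \<omega> \<omega>' :: "int \<times> int \<Rightarrow> bool" assume a: "\<forall>e\<in>Jn K n. \<omega> e = \<omega>' e"
  have "st K \<omega> y i = st K \<omega>' y i" using K a i by (intro st_agree) (auto simp: Jn_def)
  moreover have "fi K (st K \<omega>' y i) (col \<omega> i) 0 = fi K (st K \<omega>' y i) (col \<omega>' i) 0"
    using K a i by (intro fi_cong) (auto simp: Jn_def col_def)
  ultimately show "real_of_int (inc K (st K \<omega> y i) (col \<omega> i)) = real_of_int (inc K (st K \<omega>' y i) (col \<omega>' i))"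
    unfolding inc_def by simp
qed

lemma V0_sum: "V K \<omega> y n 0 = (\<Sum>i<n. inc K (st K \<omega> y i) (col \<omega> i))"
  unfolding V_def hgt_def by simp

lemma dep_V:
  assumes K: "K \<ge> 1"
  shows "dep (Jn K n) (\<lambda>\<omega>. real_of_int (V K \<omega> y n 0))"
  unfolding dep_def
proof (intro allI impI)
  fix \<omega> \<omega>' :: "int \<times> int \<Rightarrow> bool" assume a: "\<forall>e\<in>Jn K n. \<omega> e = \<omega>' e"
  have "real_of_int (inc K (st K \<omega> y i) (col \<omega> i)) = real_of_int (inc K (st K \<omega>' y i) (col \<omega>' i))" if "i < n" for i
    using dep_inc[OF K that, of y] a unfolding dep_def by blast
  then show "real_of_int (V K \<omega> y n 0) = real_of_int (V K \<omega>' y n 0)"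
    unfolding V0_sum of_int_sum by (intro sum.cong HOL.refl) auto
qed

abbreviation CM :: "real \<Rightarrow> (int \<times> int \<Rightarrow> bool) measure" where
  "CM \<epsilon> \<equiv> PiM UNIV (\<lambda>_. measure_pmf (bernoulli_pmf (1 - \<epsilon>)))"

lemma cross_measure_eq: "cross_measure \<epsilon> = CM \<epsilon>" unfolding cross_measure_def ..

lemma bridgeQ: "dep (Jn K n) (f :: _ \<Rightarrow> real) \<Longrightarrow> (\<integral>\<omega>. f \<omega> \<partial>CM \<epsilon>) = (\<integral>\<omega>. f \<omega> \<partial>Q K \<epsilon> n)"
  unfolding Q_def by (rule bridge[OF finite_Jn])

lemma integrableQ: "integrable (measure_pmf (Q K \<epsilon> n)) (f :: _ \<Rightarrow> real)"
  unfolding Q_def by (rule integrable_measure_pmf_finite[OF fin_supp[OF finite_Jn]])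

lemma exp_inc_step:
  assumes K: "K \<ge> 1" and e: "0 < \<epsilon>" "\<epsilon> < 1"
  shows "(\<integral>\<omega>. real_of_int (inc K (st K \<omega> y i) (col \<omega> i)) \<partial>CM \<epsilon>) =
    (\<integral>\<omega>. (1 + 2 * \<epsilon> * (if st K \<omega> y i 0 \<and> \<not> st K \<omega> y i 1 then 1 else 0)) \<partial>Q K \<epsilon> i)"
proof -
  have K0: "K \<ge> 0" using K by simp
  have "(\<integral>\<omega>. real_of_int (inc K (st K \<omega> y i) (col \<omega> i)) \<partial>CM \<epsilon>) =
      (\<integral>\<omega>. real_of_int (inc K (st K \<omega> y i) (col \<omega> i)) \<partial>Q K \<epsilon> (Suc i))"
    by (rule bridgeQ[OF dep_inc[OF K]]) simp
  also have "\<dots> = (\<integral>\<omega>. (\<integral>c. real_of_int (inc K (st K \<omega> y i) c) \<partial>CC K \<epsilon>) \<partial>Q K \<epsilon> i)"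
  proof (rule union_step[OF K0, where h="\<lambda>y' c. real_of_int (inc K y' c)"])
    fix y' and c c' :: "int \<Rightarrow> bool" assume "\<And>b. - K \<le> b \<Longrightarrow> b \<le> K \<Longrightarrow> c b = c' b"
    then have "fi K y' c 0 = fi K y' c' 0" by (rule fi_cong[OF K0])
    then show "real_of_int (inc K y' c) = real_of_int (inc K y' c')" unfolding inc_def by simp
  qed
  also have "\<dots> = (\<integral>\<omega>. (1 + 2 * \<epsilon> * (if st K \<omega> y i 0 \<and> \<not> st K \<omega> y i 1 then 1 else 0)) \<partial>Q K \<epsilon> i)"
    using inc_exp[OF K e] by simp
  finally show ?thesis .
qed

lemma sum_V:
  assumes st: "tasep_stationary K \<epsilon> \<nu>" and K: "K \<ge> 1" and e: "0 < \<epsilon>" "\<epsilon> < 1"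
  shows "(\<Sum>y\<in>tasep_states K. \<nu> y * (\<integral>\<omega>. real_of_int (V K \<omega> y n 0) \<partial>CM \<epsilon>)) = real n * (1 + 2 * \<epsilon> * nu_occ_emp K \<nu>)"
proof -
  have K0: "K \<ge> 0" using K by simp
  define c where "c y = (1 + 2 * \<epsilon> * (if y 0 \<and> \<not> y 1 then 1 else 0 :: real))" for y :: "int \<Rightarrow> bool"
  have EV: "(\<integral>\<omega>. real_of_int (V K \<omega> y n 0) \<partial>CM \<epsilon>) = (\<Sum>i<n. (\<integral>\<omega>. c (st K \<omega> y i) \<partial>Q K \<epsilon> i))" for y
  proof -
    have "(\<integral>\<omega>. real_of_int (V K \<omega> y n 0) \<partial>CM \<epsilon>) = (\<integral>\<omega>. real_of_int (V K \<omega> y n 0) \<partial>Q K \<epsilon> n)"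
      by (rule bridgeQ[OF dep_V[OF K]])
    also have "\<dots> = (\<integral>\<omega>. (\<Sum>i<n. real_of_int (inc K (st K \<omega> y i) (col \<omega> i))) \<partial>Q K \<epsilon> n)"
      unfolding V0_sum by simp
    also have "\<dots> = (\<Sum>i<n. (\<integral>\<omega>. real_of_int (inc K (st K \<omega> y i) (col \<omega> i)) \<partial>Q K \<epsilon> n))"
      by (rule Bochner_Integration.integral_sum) (rule integrableQ)
    also have "\<dots> = (\<Sum>i<n. (\<integral>\<omega>. real_of_int (inc K (st K \<omega> y i) (col \<omega> i)) \<partial>CM \<epsilon>))"
      by (intro sum.cong HOL.refl bridgeQ[symmetric] dep_inc[OF K]) auto
    also have "\<dots> = (\<Sum>i<n. (\<integral>\<omega>. c (st K \<omega> y i) \<partial>Q K \<epsilon> i))"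
      unfolding c_def by (intro sum.cong HOL.refl exp_inc_step[OF K e])
    finally show ?thesis .
  qed
  have "(\<Sum>y\<in>tasep_states K. \<nu> y * (\<integral>\<omega>. real_of_int (V K \<omega> y n 0) \<partial>CM \<epsilon>))
      = (\<Sum>y\<in>tasep_states K. \<Sum>i<n. \<nu> y * (\<integral>\<omega>. c (st K \<omega> y i) \<partial>Q K \<epsilon> i))"
    unfolding EV by (simp add: sum_distrib_left)
  also have "\<dots> = (\<Sum>i<n. \<Sum>y\<in>tasep_states K. \<nu> y * (\<integral>\<omega>. c (st K \<omega> y i) \<partial>Q K \<epsilon> i))"
    by (rule sum.swap)
  also have "\<dots> = (\<Sum>i<n. \<Sum>y\<in>tasep_states K. \<nu> y * c y)"
    by (intro sum.cong HOL.refl stat_iter[OF st K0 e])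
  also have "(\<Sum>y\<in>tasep_states K. \<nu> y * c y) = 1 + 2 * \<epsilon> * nu_occ_emp K \<nu>"
  proof -
    have "(\<Sum>y\<in>tasep_states K. \<nu> y * c y) = (\<Sum>y\<in>tasep_states K. \<nu> y) + 2 * \<epsilon> * (\<Sum>y\<in>tasep_states K. if y 0 \<and> \<not> y 1 then \<nu> y else 0)"
    proof -
      have "\<nu> y * c y = \<nu> y + 2 * \<epsilon> * (if y 0 \<and> \<not> y 1 then \<nu> y else 0)" for y unfolding c_def by (auto simp: algebra_simps)
      then show ?thesis by (simp add: sum.distrib sum_distrib_left)
    qed
    also have "(\<Sum>y\<in>tasep_states K. if y 0 \<and> \<not> y 1 then \<nu> y else 0) = nu_occ_emp K \<nu>"
      unfolding nu_occ_emp_def using finite_states by (simp add: sum.inter_filter)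
    also have "(\<Sum>y\<in>tasep_states K. \<nu> y) = 1" using st unfolding tasep_stationary_def by blast
    finally show ?thesis .
  qed
  finally show ?thesis by simp
qed

lemma bounds_exp:
  assumes y: "y \<in> tasep_states K" and K: "K \<ge> 1" and n: "int n \<ge> K"
  shows "(\<integral>\<omega>. real_of_int (V K \<omega> y n 0) \<partial>CM \<epsilon>) \<le> (\<integral>\<omega>. real (cross_dist K \<omega> (int n, 0)) \<partial>CM \<epsilon>) \<and>
         (\<integral>\<omega>. real (cross_dist K \<omega> (int n, 0)) \<partial>CM \<epsilon>) \<le> (\<integral>\<omega>. real_of_int (V K \<omega> y n 0) \<partial>CM \<epsilon>) + 3 * K"
proof -
  have b: "real_of_int (V K \<omega> y n 0) \<le> real (cross_dist K \<omega> (int n, 0)) \<and>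
         real (cross_dist K \<omega> (int n, 0)) \<le> real_of_int (V K \<omega> y n 0) + 3 * K" for \<omega>
  proof -
    have "V K \<omega> y n 0 \<le> int (cross_dist K \<omega> (int n, 0)) \<and>
         int (cross_dist K \<omega> (int n, 0)) \<le> V K \<omega> y n 0 + 3 * K" by (rule dist_bounds[OF y K n])
    then show ?thesis by linarith
  qed
  have e1: "(\<integral>\<omega>. real_of_int (V K \<omega> y n 0) \<partial>CM \<epsilon>) = (\<integral>\<omega>. real_of_int (V K \<omega> y n 0) \<partial>Q K \<epsilon> n)"
    by (rule bridgeQ[OF dep_V[OF K]])
  have e2: "(\<integral>\<omega>. real (cross_dist K \<omega> (int n, 0)) \<partial>CM \<epsilon>) = (\<integral>\<omega>. real (cross_dist K \<omega> (int n, 0)) \<partial>Q K \<epsilon> n)"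
    by (rule bridgeQ[OF dep_dist])
  have "(\<integral>\<omega>. real_of_int (V K \<omega> y n 0) \<partial>Q K \<epsilon> n) \<le> (\<integral>\<omega>. real (cross_dist K \<omega> (int n, 0)) \<partial>Q K \<epsilon> n)"
    using b by (intro integral_mono integrableQ) auto
  moreover have "(\<integral>\<omega>. real (cross_dist K \<omega> (int n, 0)) \<partial>Q K \<epsilon> n) \<le> (\<integral>\<omega>. real_of_int (V K \<omega> y n 0) + 3 * K \<partial>Q K \<epsilon> n)"
    using b by (intro integral_mono integrableQ) auto
  moreover have "(\<integral>\<omega>. real_of_int (V K \<omega> y n 0) + 3 * K \<partial>Q K \<epsilon> n) = (\<integral>\<omega>. real_of_int (V K \<omega> y n 0) \<partial>Q K \<epsilon> n) + 3 * K"
    by (subst Bochner_Integration.integral_add) (auto simp: integrableQ measure_pmf.prob_space)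
  ultimately show ?thesis unfolding e1 e2 by linarith
qed

theorem proposition4:
  fixes K :: int and \<epsilon> :: real and \<nu> :: "(int \<Rightarrow> bool) \<Rightarrow> real"
  assumes "K \<ge> 1" and "0 < \<epsilon>" and "\<epsilon> < 1"
    and "tasep_stationary K \<epsilon> \<nu>"
  shows "(\<lambda>n::nat. (\<integral>\<omega>. real (cross_dist K \<omega> (int n, 0)) \<partial>cross_measure \<epsilon>) / real n)
           \<longlonglongrightarrow> 1 + 2 * \<epsilon> * nu_occ_emp K \<nu>"
proof -
  note K = assms(1) and e = assms(2,3) and st = assms(4)
  define c where "c = 1 + 2 * \<epsilon> * nu_occ_emp K \<nu>"
  define a where "a n = (\<integral>\<omega>. real (cross_dist K \<omega> (int n, 0)) \<partial>CM \<epsilon>)" for n :: nat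
  define S where "S = tasep_states K"
  have nu0: "\<forall>y\<in>S. 0 \<le> \<nu> y" and nu1: "(\<Sum>y\<in>S. \<nu> y) = 1"
    using st unfolding tasep_stationary_def S_def by blast+
  have ab: "real n * c \<le> a n \<and> a n \<le> real n * c + 3 * K" if n: "int n \<ge> K" for n
  proof -
    define EV where "EV y = (\<integral>\<omega>. real_of_int (V K \<omega> y n 0) \<partial>CM \<epsilon>)" for y
    have sv: "(\<Sum>y\<in>S. \<nu> y * EV y) = real n * c" unfolding S_def EV_def c_def by (rule sum_V[OF st K e])
    have bd: "EV y \<le> a n \<and> a n \<le> EV y + 3 * K" if "y \<in> S" for y
      unfolding EV_def a_def using bounds_exp[OF that[unfolded S_def] K n] .
    have "(\<Sum>y\<in>S. \<nu> y * EV y) \<le> (\<Sum>y\<in>S. \<nu> y * a n)"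
      using bd nu0 by (intro sum_mono mult_left_mono) auto
    also have "\<dots> = a n" using nu1 by (simp add: sum_distrib_right[symmetric])
    finally have 1: "real n * c \<le> a n" using sv by simp
    have "a n = (\<Sum>y\<in>S. \<nu> y * a n)" using nu1 by (simp add: sum_distrib_right[symmetric])
    also have "\<dots> \<le> (\<Sum>y\<in>S. \<nu> y * (EV y + 3 * K))"
      using bd nu0 by (intro sum_mono mult_left_mono) auto
    also have "\<dots> = (\<Sum>y\<in>S. \<nu> y * EV y + (3 * K) * \<nu> y)"
      by (simp add: algebra_simps)
    also have "\<dots> = (\<Sum>y\<in>S. \<nu> y * EV y) + (3 * K) * (\<Sum>y\<in>S. \<nu> y)"
      by (subst sum.distrib) (simp add: sum_distrib_left)
    also have "\<dots> = (\<Sum>y\<in>S. \<nu> y * EV y) + 3 * K" using nu1 by simp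
    finally have 2: "a n \<le> real n * c + 3 * K" using sv by simp
    show ?thesis using 1 2 by simp
  qed
  have ev1: "eventually (\<lambda>n. c \<le> a n / real n) sequentially"
  proof (rule eventually_sequentiallyI[of "nat K"])
    fix n assume "nat K \<le> n"
    then have n: "int n \<ge> K" and np: "real n > 0" using K by auto
    show "c \<le> a n / real n" using ab[OF n] np by (simp add: pos_le_divide_eq mult.commute)
  qed
  have ev2: "eventually (\<lambda>n. a n / real n \<le> c + 3 * K / real n) sequentially"
  proof (rule eventually_sequentiallyI[of "nat K"])
    fix n assume "nat K \<le> n"
    then have n: "int n \<ge> K" and np: "real n > 0" using K by auto
    have "a n / real n \<le> (real n * c + 3 * K) / real n" using ab[OF n] np by (simp add: divide_right_mono)
    also have "\<dots> = c + 3 * K / real n" using np by (simp add: add_divide_distrib)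
    finally show "a n / real n \<le> c + 3 * K / real n" .
  qed
  have lim: "(\<lambda>n. c + 3 * K / real n) \<longlonglongrightarrow> c + 0"
    by (intro tendsto_add tendsto_const lim_const_over_n)
  have "(\<lambda>n. a n / real n) \<longlonglongrightarrow> c"
    by (rule tendsto_sandwich[OF ev1 ev2 tendsto_const]) (use lim in simp)
  then show ?thesis unfolding a_def c_def cross_measure_eq .
qed

end
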